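(* Consider the $N$-node uplink system described in the context, let $\beta_1,\dots,\beta_N>0$, define the Lyapunov function $L(t)=\frac1N\sum_{i=1}^N\beta_iD_{t,i}$ and, for a given action $\bm{a}_t=(a_{t,1},\dots,a_{t,N})\in\{0,1\}^N$ with $\sum_i a_{t,i}\le1$, the Lyapunov drift $\Delta=\mathbb{E}[L(t+1)-L(t)\mid \bm{B}_t,\bm{a}_t]$, where $\bm{B}_t$ is the AP's current belief state (the destination AoIs $D_{t,i}$ together with the local-age beliefs $\bm{b}_{t,i}$). Let $G_{t,i}=D_{t,i}-\sum_{d\ge1}b_{t,i}(d)\,d$. Then the drift is minimized over all such actions by scheduling a node $i$ with maximal value of $\beta_ip_iG_{t,i}$.
   Context: System: $N$ nodes $i=1,\dots,N$ and one access point (AP); time slots $t=0,1,2,\dots$. Node $i$ receives a status update in each slot independently with probability $\lambda_i\in(0,1]$ and keeps only the latest one. Local age: $d_{t+1,i}=1$ if an update arrives at node $i$ in slot $t$, else $d_{t+1,i}=d_{t,i}+1$; always $D_{t,i}\ge d_{t,i}$. In each slot the AP schedules at most one node ($a_{t,i}=1$ iff node $i$ is scheduled); a scheduled node $i$'s transmission succeeds with probability $p_i\in(0,1]$ independently. If node $i$ is scheduled and succeeds in slot $t$, the AP observes $d_{t,i}$ and $D_{t+1,i}=d_{t,i}+1$; otherwise the AP observes nothing about $d_{t,i}$ and $D_{t+1,i}=D_{t,i}+1$. The belief $b_{t,i}(d)=\Pr(d_{t,i}=d\mid\text{AP history up to slot }t-1)$, and $D_{t,i}$ is known to the AP. *)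

theory Defs
  imports "HOL-Probability.Probability"
begin

text \<open>Nodes are indexed 0..N-1. An action is a predicate a :: nat => bool
  (a i = True iff node i is scheduled); admissible iff at most one node
  among 0..N-1 is scheduled.\<close>

definition admissible_action :: "nat \<Rightarrow> (nat \<Rightarrow> bool) \<Rightarrow> bool" where
  "admissible_action N a \<longleftrightarrow> (\<forall>i j. i < N \<longrightarrow> j < N \<longrightarrow> a i \<longrightarrow> a j \<longrightarrow> i = j)"

definition lyap :: "nat \<Rightarrow> (nat \<Rightarrow> real) \<Rightarrow> (nat \<Rightarrow> nat) \<Rightarrow> real" where
  "lyap N \<beta> D = (1 / real N) * (\<Sum>i<N. \<beta> i * real (D i))"

text \<open>For every node i, the current local age d_i is
  drawn from the belief b i and the transmission outcome s_i from
  Bernoulli(p i), independently; then D' i = d_i + 1 if node i is scheduled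
  and succeeds, and D' i = D i + 1 otherwise.\<close>
definition next_D :: "nat \<Rightarrow> (nat \<Rightarrow> nat) \<Rightarrow> (nat \<Rightarrow> nat pmf) \<Rightarrow> (nat \<Rightarrow> real)
    \<Rightarrow> (nat \<Rightarrow> bool) \<Rightarrow> (nat \<Rightarrow> nat) pmf" where
  "next_D N D b p a =
     map_pmf (\<lambda>ds i. if a i \<and> snd (ds i) then fst (ds i) + 1 else D i + 1)
       (Pi_pmf {..<N} (0, False) (\<lambda>i. pair_pmf (b i) (bernoulli_pmf (p i))))"

definition drift :: "nat \<Rightarrow> (nat \<Rightarrow> real) \<Rightarrow> (nat \<Rightarrow> real) \<Rightarrow> (nat \<Rightarrow> nat)
    \<Rightarrow> (nat \<Rightarrow> nat pmf) \<Rightarrow> (nat \<Rightarrow> bool) \<Rightarrow> real" where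
  "drift N \<beta> p D b a =
     measure_pmf.expectation (next_D N D b p a) (\<lambda>D'. lyap N \<beta> D' - lyap N \<beta> D)"

definition Gval :: "(nat \<Rightarrow> nat) \<Rightarrow> (nat \<Rightarrow> nat pmf) \<Rightarrow> nat \<Rightarrow> real" where
  "Gval D b i = real (D i) - measure_pmf.expectation (b i) real"

end

theory Submission
  imports Defs
begin

lemma comp_exp:
  fixes q :: real and Di :: nat and B :: "nat pmf"
  assumes q: "0 \<le> q" "q \<le> 1" and supp: "set_pmf B \<subseteq> {1..Di}"
  shows "measure_pmf.expectation (pair_pmf B (bernoulli_pmf q))
           (\<lambda>z. real (if c \<and> snd z then fst z + 1 else Di + 1))
         = real Di + 1 - (if c then q * (real Di - measure_pmf.expectation B real) else 0)"
proof (cases c)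
  case False then show ?thesis by simp
next
  case True
  have fin: "finite ({1..Di} \<times> (UNIV::bool set))" by simp
  have "measure_pmf.expectation (pair_pmf B (bernoulli_pmf q))
           (\<lambda>z. real (if c \<and> snd z then fst z + 1 else Di + 1))
       = (\<Sum>z\<in>{1..Di} \<times> (UNIV::bool set). pmf (pair_pmf B (bernoulli_pmf q)) z *\<^sub>R
            real (if c \<and> snd z then fst z + 1 else Di + 1))"
    by (rule integral_measure_pmf[OF fin]) (use supp in auto)
  also have "\<dots> = (\<Sum>x\<in>{1..Di}. \<Sum>s\<in>(UNIV::bool set). pmf (pair_pmf B (bernoulli_pmf q)) (x,s) *\<^sub>R
            real (if c \<and> s then x + 1 else Di + 1))"
    unfolding sum.cartesian_product by (simp add: case_prod_unfold)
  also have "\<dots> = (\<Sum>x\<in>{1..Di}. pmf B x * (q * (real x + 1) + (1 - q) * (real Di + 1)))"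
    using True q by (simp add: UNIV_bool pmf_pair algebra_simps)
  also have "\<dots> = q * (\<Sum>x\<in>{1..Di}. pmf B x * real x) + (\<Sum>x\<in>{1..Di}. pmf B x) * (q + (1-q) * (real Di + 1))"
  proof -
    have "(\<Sum>x\<in>{1..Di}. pmf B x * (q * (real x + 1) + (1 - q) * (real Di + 1)))
        = (\<Sum>x\<in>{1..Di}. q * (pmf B x * real x) + pmf B x * (q + (1-q) * (real Di + 1)))"
      by (rule sum.cong) (simp_all add: algebra_simps)
    then show ?thesis by (simp add: sum.distrib sum_distrib_left sum_distrib_right)
  qed
  also have "(\<Sum>x\<in>{1..Di}. pmf B x) = 1" using supp by (intro sum_pmf_eq_1) auto
  also have "(\<Sum>x\<in>{1..Di}. pmf B x * real x) = measure_pmf.expectation B real"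
  proof -
    have "measure_pmf.expectation B real = (\<Sum>x\<in>{1..Di}. pmf B x *\<^sub>R real x)"
      by (rule integral_measure_pmf) (use supp in auto)
    then show ?thesis by simp
  qed
  finally show ?thesis using True by (simp add: algebra_simps)
qed

lemma G_nonneg:
  assumes supp: "set_pmf B \<subseteq> {1..Di}"
  shows "measure_pmf.expectation B real \<le> real Di"
proof -
  have fin: "finite (set_pmf B)" using supp finite_subset by blast
  show ?thesis
    by (rule measure_pmf.integral_le_const[OF integrable_measure_pmf_finite[OF fin]])
       (use supp in \<open>auto simp: AE_measure_pmf_iff\<close>)
qed

lemma drift_formula:
  fixes N :: nat and \<beta> p :: "nat \<Rightarrow> real" and D :: "nat \<Rightarrow> nat"
    and b :: "nat \<Rightarrow> nat pmf"
  assumes p_range: "\<And>i. i < N \<Longrightarrow> 0 < p i \<and> p i \<le> 1"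
    and belief_support: "\<And>i. i < N \<Longrightarrow> set_pmf (b i) \<subseteq> {1..D i}"
  shows "drift N \<beta> p D b a = (1 / real N) *
           (\<Sum>i<N. \<beta> i * (1 - (if a i then p i * Gval D b i else 0)))"
proof -
  define M where "M = Pi_pmf {..<N} (0, False) (\<lambda>i. pair_pmf (b i) (bernoulli_pmf (p i)))"
  define F where "F = (\<lambda>ds i. if a i \<and> snd (ds i) then fst (ds i) + 1 else D i + 1)"
  have finb: "finite (set_pmf (b i))" if "i < N" for i
    using belief_support[OF that] finite_subset by blast
  have finM: "finite (set_pmf M)"
    unfolding M_def by (subst set_Pi_pmf) (auto intro!: finite_PiE_dflt simp: finb)
  have int: "integrable M f" for f :: "_ \<Rightarrow> real"
    by (rule integrable_measure_pmf_finite[OF finM])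
  have comp: "measure_pmf.expectation M (\<lambda>ds. real (F ds i)) =
       real (D i) + 1 - (if a i then p i * Gval D b i else 0)" if i: "i < N" for i
  proof -
    have "measure_pmf.expectation M (\<lambda>ds. real (F ds i)) =
          measure_pmf.expectation (map_pmf (\<lambda>f. f i) M)
           (\<lambda>z. real (if a i \<and> snd z then fst z + 1 else D i + 1))"
      by (simp add: F_def)
    also have "map_pmf (\<lambda>f. f i) M = pair_pmf (b i) (bernoulli_pmf (p i))"
      unfolding M_def using i by (subst Pi_pmf_component) auto
    also have "measure_pmf.expectation (pair_pmf (b i) (bernoulli_pmf (p i)))
           (\<lambda>z. real (if a i \<and> snd z then fst z + 1 else D i + 1))
         = real (D i) + 1 - (if a i then p i * (real (D i) - measure_pmf.expectation (b i) real) else 0)"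
      using p_range[OF i] belief_support[OF i] by (intro comp_exp) auto
    finally show ?thesis by (simp add: Gval_def)
  qed
  have "drift N \<beta> p D b a = measure_pmf.expectation M
          (\<lambda>ds. (1 / real N) * (\<Sum>i<N. \<beta> i * (real (F ds i) - real (D i))))"
    unfolding drift_def next_D_def M_def[symmetric] F_def[symmetric]
    by (simp add: lyap_def right_diff_distrib sum_subtractf)
  also have "\<dots> = (1 / real N) * (\<Sum>i<N. \<beta> i * (measure_pmf.expectation M (\<lambda>ds. real (F ds i)) - real (D i)))"
    by (simp add: int)
  also have "\<dots> = (1 / real N) * (\<Sum>i<N. \<beta> i * (1 - (if a i then p i * Gval D b i else 0)))"
    by (intro arg_cong[where f="\<lambda>x. (1 / real N) * x"] sum.cong) (simp_all add: comp)
  finally show ?thesis .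
qed

theorem proposition2:
  fixes N :: nat and \<beta> p :: "nat \<Rightarrow> real" and D :: "nat \<Rightarrow> nat"
    and b :: "nat \<Rightarrow> nat pmf" and i0 :: nat
  assumes beta_pos: "\<And>i. i < N \<Longrightarrow> \<beta> i > 0"
    and p_range: "\<And>i. i < N \<Longrightarrow> 0 < p i \<and> p i \<le> 1"
    and belief_support: "\<And>i. i < N \<Longrightarrow> set_pmf (b i) \<subseteq> {1..D i}"
    and i0: "i0 < N"
    and i0_max: "\<And>i. i < N \<Longrightarrow> \<beta> i * p i * Gval D b i \<le> \<beta> i0 * p i0 * Gval D b i0"
  shows "\<forall>a. admissible_action N a \<longrightarrow>
           drift N \<beta> p D b (\<lambda>j. j = i0) \<le> drift N \<beta> p D b a"
proof (intro allI impI)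
  fix a assume adm: "admissible_action N a"
  define h where "h = (\<lambda>i. \<beta> i * p i * Gval D b i)"
  have h0: "0 \<le> h i0"
    unfolding h_def Gval_def using beta_pos[OF i0] p_range[OF i0] G_nonneg[OF belief_support[OF i0]]
    by simp
  have key: "(\<Sum>i<N. \<beta> i * (1 - (if a i then p i * Gval D b i else 0)))
           = (\<Sum>i<N. \<beta> i) - (\<Sum>i<N. if a i then h i else 0)" for a
    unfolding sum_subtractf[symmetric] by (rule sum.cong) (auto simp: h_def algebra_simps)
  have s0: "(\<Sum>i<N. if i = i0 then h i else 0) = h i0" using i0 by simp
  have sa: "(\<Sum>i<N. if a i then h i else 0) \<le> h i0"
  proof (cases "\<exists>j<N. a j")
    case True
    then obtain j where j: "j < N" "a j" by blast
    have "(\<Sum>i<N. if a i then h i else 0) = (\<Sum>i<N. if i = j then h i else 0)"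
      using adm j unfolding admissible_action_def by (intro sum.cong) auto
    also have "\<dots> = h j" using j by simp
    finally show ?thesis using i0_max[OF j(1)] by (simp add: h_def)
  next
    case False
    then have "(\<Sum>i<N. if a i then h i else 0) = 0" by (intro sum.neutral) auto
    then show ?thesis using h0 by simp
  qed
  have Npos: "0 < real N" using i0 by simp
  show "drift N \<beta> p D b (\<lambda>j. j = i0) \<le> drift N \<beta> p D b a"
  proof -
    have "drift N \<beta> p D b (\<lambda>j. j = i0) = (1 / real N) * ((\<Sum>i<N. \<beta> i) - h i0)"
      using drift_formula[OF p_range belief_support, where a="\<lambda>j. j = i0"] key[of "\<lambda>j. j = i0"] s0 by simp
    moreover have "drift N \<beta> p D b a = (1 / real N) * ((\<Sum>i<N. \<beta> i) - (\<Sum>i<N. if a i then h i else 0))"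
      using drift_formula[OF p_range belief_support, where a=a] key[of a] by simp
    ultimately show ?thesis using sa Npos by (simp add: divide_right_mono)
  qed
qed
end
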